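(* Let $V$ be a mixed lattice vector space and $p$ a seminorm on $V$. The following are equivalent: (a) $p$ is a mixed lattice seminorm; (b) $p$ is a mixed-monotone seminorm and $p(s(x))=p(x)$ for all $x\in V$.
   Context: A mixed lattice vector space $(V,\le,\preccurlyeq)$ is a real vector space $V$ with two partial orderings $\le$ (initial order) and $\preccurlyeq$ (specific order), each making $V$ a partially ordered vector space, with positive cones $V_p=\{x:0\le x\}$, $V_{sp}=\{x:0\preccurlyeq x\}$, such that: (1) for all $x,y$ the elements $x\curlyvee y=\min\{w: w\succcurlyeq x,\ w\ge y\}$ and $x\curlywedge y=\max\{w: w\preccurlyeq x,\ w\le y\}$ exist (min/max with respect to $\le$); (2) $x\preccurlyeq y$ implies $x\le y$; (3) $x\curlyvee y, x\curlywedge y\in V_{sp}$ whenever $x,y\in V_{sp}$. Notation: $x^u=0\curlyvee x$, $x^l=0\curlyvee(-x)$, $s(x)=x^u+x^l$. A seminorm $p$ is mixed-monotone if $0\preccurlyeq x\le y$ implies $p(x)\le p(y)$, and is a mixed lattice seminorm if $s(x)\le s(y)$ implies $p(x)\le p(y)$. *)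

theory Defs
  imports Main "HOL-Analysis.Analysis"
begin

definition partial_order_rel :: "('a \<Rightarrow> 'a \<Rightarrow> bool) \<Rightarrow> bool" where
  "partial_order_rel r \<longleftrightarrow>
     (\<forall>x. r x x) \<and> (\<forall>x y. r x y \<and> r y x \<longrightarrow> x = y) \<and>
     (\<forall>x y z. r x y \<and> r y z \<longrightarrow> r x z)"

definition ordered_vector_rel :: "('a::real_vector \<Rightarrow> 'a \<Rightarrow> bool) \<Rightarrow> bool" where
  "ordered_vector_rel r \<longleftrightarrow> partial_order_rel r \<and>
     (\<forall>x y z. r x y \<longrightarrow> r (x + z) (y + z)) \<and>
     (\<forall>x y (c::real). r x y \<and> 0 \<le> c \<longrightarrow> r (c *\<^sub>R x) (c *\<^sub>R y))"

definition is_least_rel :: "('a \<Rightarrow> 'a \<Rightarrow> bool) \<Rightarrow> 'a set \<Rightarrow> 'a \<Rightarrow> bool" where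
  "is_least_rel r S w \<longleftrightarrow> w \<in> S \<and> (\<forall>v\<in>S. r w v)"

definition is_greatest_rel :: "('a \<Rightarrow> 'a \<Rightarrow> bool) \<Rightarrow> 'a set \<Rightarrow> 'a \<Rightarrow> bool" where
  "is_greatest_rel r S w \<longleftrightarrow> w \<in> S \<and> (\<forall>v\<in>S. r v w)"

text \<open>Mixed upper bound \<open>x \<curlyvee> y = min\<^sub>\<le>{w. x \<preccurlyeq> w, y \<le> w}\<close> and
  mixed lower bound \<open>x \<curlywedge> y = max\<^sub>\<le>{w. w \<preccurlyeq> x, w \<le> y}\<close>;
  \<open>le\<close> is the initial order \<open>\<le>\<close>, \<open>sle\<close> the specific order \<open>\<preccurlyeq>\<close>.\<close>
definition mixed_upper :: "('a \<Rightarrow> 'a \<Rightarrow> bool) \<Rightarrow> ('a \<Rightarrow> 'a \<Rightarrow> bool) \<Rightarrow> 'a \<Rightarrow> 'a \<Rightarrow> 'a" where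
  "mixed_upper le sle x y = (THE w. is_least_rel le {w. sle x w \<and> le y w} w)"

definition mixed_lower :: "('a \<Rightarrow> 'a \<Rightarrow> bool) \<Rightarrow> ('a \<Rightarrow> 'a \<Rightarrow> bool) \<Rightarrow> 'a \<Rightarrow> 'a \<Rightarrow> 'a" where
  "mixed_lower le sle x y = (THE w. is_greatest_rel le {w. sle w x \<and> le w y} w)"

definition mixed_lattice_vector_space ::
  "('a::real_vector \<Rightarrow> 'a \<Rightarrow> bool) \<Rightarrow> ('a \<Rightarrow> 'a \<Rightarrow> bool) \<Rightarrow> bool" where
  "mixed_lattice_vector_space le sle \<longleftrightarrow>
     ordered_vector_rel le \<and> ordered_vector_rel sle \<and>
     (\<forall>x y. \<exists>w. is_least_rel le {w. sle x w \<and> le y w} w) \<and>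
     (\<forall>x y. \<exists>w. is_greatest_rel le {w. sle w x \<and> le w y} w) \<and>
     (\<forall>x y. sle x y \<longrightarrow> le x y) \<and>
     (\<forall>x y. sle 0 x \<and> sle 0 y \<longrightarrow>
        sle 0 (mixed_upper le sle x y) \<and> sle 0 (mixed_lower le sle x y))"

definition upper_part :: "('a::real_vector \<Rightarrow> 'a \<Rightarrow> bool) \<Rightarrow> ('a \<Rightarrow> 'a \<Rightarrow> bool) \<Rightarrow> 'a \<Rightarrow> 'a" where
  "upper_part le sle x = mixed_upper le sle 0 x"

definition lower_part :: "('a::real_vector \<Rightarrow> 'a \<Rightarrow> bool) \<Rightarrow> ('a \<Rightarrow> 'a \<Rightarrow> bool) \<Rightarrow> 'a \<Rightarrow> 'a" where
  "lower_part le sle x = mixed_upper le sle 0 (- x)"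

definition sgen :: "('a::real_vector \<Rightarrow> 'a \<Rightarrow> bool) \<Rightarrow> ('a \<Rightarrow> 'a \<Rightarrow> bool) \<Rightarrow> 'a \<Rightarrow> 'a" where
  "sgen le sle x = upper_part le sle x + lower_part le sle x"

definition is_seminorm :: "('a::real_vector \<Rightarrow> real) \<Rightarrow> bool" where
  "is_seminorm p \<longleftrightarrow>
     (\<forall>x y. p (x + y) \<le> p x + p y) \<and> (\<forall>(c::real) x. p (c *\<^sub>R x) = \<bar>c\<bar> * p x)"

definition mixed_monotone :: "('a::real_vector \<Rightarrow> 'a \<Rightarrow> bool) \<Rightarrow> ('a \<Rightarrow> 'a \<Rightarrow> bool) \<Rightarrow> ('a \<Rightarrow> real) \<Rightarrow> bool" where
  "mixed_monotone le sle p \<longleftrightarrow> (\<forall>x y. sle 0 x \<and> le x y \<longrightarrow> p x \<le> p y)"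

definition mixed_lattice_seminorm :: "('a::real_vector \<Rightarrow> 'a \<Rightarrow> bool) \<Rightarrow> ('a \<Rightarrow> 'a \<Rightarrow> bool) \<Rightarrow> ('a \<Rightarrow> real) \<Rightarrow> bool" where
  "mixed_lattice_seminorm le sle p \<longleftrightarrow>
     (\<forall>x y. le (sgen le sle x) (sgen le sle y) \<longrightarrow> p x \<le> p y)"

end

theory Submission
  imports Defs
begin

lemma mu_least:
  assumes "mixed_lattice_vector_space le sle"
  shows "is_least_rel le {w. sle x w \<and> le y w} (mixed_upper le sle x y)"
proof -
  have po: "partial_order_rel le" using assms
    unfolding mixed_lattice_vector_space_def ordered_vector_rel_def by blast
  obtain w where w: "is_least_rel le {w. sle x w \<and> le y w} w"
    using assms unfolding mixed_lattice_vector_space_def by blast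
  have "\<And>v. is_least_rel le {w. sle x w \<and> le y w} v \<Longrightarrow> v = w"
    using w po unfolding is_least_rel_def partial_order_rel_def by blast
  hence "mixed_upper le sle x y = w" unfolding mixed_upper_def using w by (rule the_equality[rotated])
  thus ?thesis using w by simp
qed

lemma facts:
  assumes A: "mixed_lattice_vector_space le sle"
  shows "sle 0 (sgen le sle x)"
    and "sle 0 x \<Longrightarrow> sgen le sle x = x"
    and "le y (sgen le sle y)"
proof -
  have po: "partial_order_rel le" and pos: "partial_order_rel sle"
   and sv: "ordered_vector_rel sle" and lv: "ordered_vector_rel le"
   and sl: "\<And>x y. sle x y \<Longrightarrow> le x y"
    using A unfolding mixed_lattice_vector_space_def ordered_vector_rel_def by blast+
  have addp: "\<And>a b. sle 0 a \<Longrightarrow> sle 0 b \<Longrightarrow> sle 0 (a + b)"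
  proof -
    fix a b assume "sle 0 a" "sle 0 b"
    hence "sle b (a + b)" using sv unfolding ordered_vector_rel_def by (metis add_0)
    thus "sle 0 (a+b)" using \<open>sle 0 b\<close> pos unfolding partial_order_rel_def by blast
  qed
  have addl: "\<And>a b. le 0 a \<Longrightarrow> le 0 b \<Longrightarrow> le 0 (a + b)"
  proof -
    fix a b assume "le 0 a" "le 0 b"
    hence "le b (a + b)" using lv unfolding ordered_vector_rel_def by (metis add_0)
    thus "le 0 (a+b)" using \<open>le 0 b\<close> po unfolding partial_order_rel_def by blast
  qed
  have U: "\<And>z. sle 0 (upper_part le sle z) \<and> le z (upper_part le sle z)
           \<and> (\<forall>v. sle 0 v \<and> le z v \<longrightarrow> le (upper_part le sle z) v)"
    using mu_least[OF A] unfolding upper_part_def is_least_rel_def by blast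
  have L: "\<And>z. sle 0 (lower_part le sle z) \<and> le (-z) (lower_part le sle z)
           \<and> (\<forall>v. sle 0 v \<and> le (-z) v \<longrightarrow> le (lower_part le sle z) v)"
    using mu_least[OF A] unfolding lower_part_def is_least_rel_def by blast
  show "sle 0 (sgen le sle x)" unfolding sgen_def using U L addp by blast
  show "le y (sgen le sle y)"
  proof -
    have "le 0 (lower_part le sle y)" using L sl by blast
    hence "le (upper_part le sle y) (sgen le sle y)"
      using lv unfolding ordered_vector_rel_def sgen_def by (metis add_0 add.commute)
    thus ?thesis using U po unfolding partial_order_rel_def by blast
  qed
  assume x0: "sle 0 x"
  have lx: "le 0 x" using sl x0 by blast
  have "upper_part le sle x = x"
    using U[of x] x0 po unfolding partial_order_rel_def by blast
  moreover have "lower_part le sle x = 0"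
  proof -
    have "le (-x) 0" using lx lv unfolding ordered_vector_rel_def by (metis add.commute add_0 neg_eq_iff_add_eq_0)
    hence "le (lower_part le sle x) 0" using L[of x] pos unfolding partial_order_rel_def by blast
    moreover have "le 0 (lower_part le sle x)" using L sl by blast
    ultimately show ?thesis using po unfolding partial_order_rel_def by blast
  qed
  ultimately show "sgen le sle x = x" unfolding sgen_def by simp
qed

theorem proposition4p4:
  fixes le sle :: "'a::real_vector \<Rightarrow> 'a \<Rightarrow> bool" and p :: "'a \<Rightarrow> real"
  assumes "mixed_lattice_vector_space le sle"
    and "is_seminorm p"
  shows "mixed_lattice_seminorm le sle p \<longleftrightarrow>
         (mixed_monotone le sle p \<and> (\<forall>x. p (sgen le sle x) = p x))"
proof -
  note F = facts[OF assms(1)]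
  have po: "partial_order_rel le"
    using assms(1) unfolding mixed_lattice_vector_space_def ordered_vector_rel_def by blast
  have ss: "\<And>x. sgen le sle (sgen le sle x) = sgen le sle x" using F(1) F(2) by blast
  have refl: "\<And>x. le x x" using po unfolding partial_order_rel_def by blast
  show ?thesis
  proof
    assume a: "mixed_lattice_seminorm le sle p"
    have "\<And>x y. sle 0 x \<Longrightarrow> le x y \<Longrightarrow> p x \<le> p y"
    proof -
      fix x y assume "sle 0 x" "le x y"
      hence "le (sgen le sle x) (sgen le sle y)"
        using F(2) F(3)[of y] po unfolding partial_order_rel_def by metis
      thus "p x \<le> p y" using a unfolding mixed_lattice_seminorm_def by blast
    qed
    moreover have "\<And>x. p (sgen le sle x) = p x"
      using a ss refl unfolding mixed_lattice_seminorm_def by (metis order_antisym)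
    ultimately show "mixed_monotone le sle p \<and> (\<forall>x. p (sgen le sle x) = p x)"
      unfolding mixed_monotone_def by blast
  next
    assume b: "mixed_monotone le sle p \<and> (\<forall>x. p (sgen le sle x) = p x)"
    show "mixed_lattice_seminorm le sle p" unfolding mixed_lattice_seminorm_def
    proof (intro allI impI)
      fix x y assume "le (sgen le sle x) (sgen le sle y)"
      hence "p (sgen le sle x) \<le> p (sgen le sle y)"
        using b F(1) unfolding mixed_monotone_def by blast
      thus "p x \<le> p y" using b by simp
    qed
  qed
qed

end
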